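(* Let $k\ge2$ and $n\ge1$, and let $h_k(x_1,\dots,x_n)=\sum_{|J|=k}x^J$ be the complete homogeneous symmetric polynomial of degree $k$. Then the polynomials $\partial h_k/\partial x_i$, $i=1,\dots,n$, have no common zero in $\mathbb{C}^n\setminus\{0\}$. *)

theory Defs
  imports "HOL-Analysis.Analysis"
begin

text \<open>Points of C^n are represented as functions nat \<Rightarrow> complex; only the
  coordinates 0..n-1 are used. Multi-indices J are exponent vectors supported in {0..<n}.\<close>

definition multi_indices :: "nat \<Rightarrow> nat \<Rightarrow> (nat \<Rightarrow> nat) set" where
  "multi_indices n k = {J. (\<forall>i. n \<le> i \<longrightarrow> J i = 0) \<and> (\<Sum>i<n. J i) = k}"

definition hcomplete :: "nat \<Rightarrow> nat \<Rightarrow> (nat \<Rightarrow> complex) \<Rightarrow> complex" where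
  "hcomplete n k x = (\<Sum>J\<in>multi_indices n k. \<Prod>i<n. x i ^ J i)"

definition partial_deriv :: "nat \<Rightarrow> ((nat \<Rightarrow> complex) \<Rightarrow> complex) \<Rightarrow> (nat \<Rightarrow> complex) \<Rightarrow> complex" where
  "partial_deriv i f x = deriv (\<lambda>t. f (x(i := t))) (x i)"

end

theory Submission
  imports Defs "HOL-Computational_Algebra.Polynomial"
begin

lemma finite_MI: "finite (multi_indices n k)"
proof -
  have "multi_indices n k \<subseteq> {f. \<forall>x. (x \<in> {..<n} \<longrightarrow> f x \<in> {..k}) \<and> (x \<notin> {..<n} \<longrightarrow> f x = 0)}"
  proof (clarsimp simp: multi_indices_def)
    fix J :: "nat \<Rightarrow> nat" and x assume "\<forall>i\<ge>n. J i = 0" "x < n"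
    hence "J x \<le> (\<Sum>i<n. J i)" using member_le_sum[of x "{..<n}" J] by auto
    thus "J x \<le> (\<Sum>i<n. J i)" .
  qed
  thus ?thesis by (rule finite_subset) (rule finite_set_of_finite_funs, auto)
qed

lemma prod_split_i:
  fixes x :: "nat \<Rightarrow> complex"
  assumes "i < n"
  shows "(\<Prod>l<n. x l ^ J l) = x i ^ J i * (\<Prod>l<n. (x(i:=0)) l ^ (J(i:=0)) l)"
proof -
  have "(\<Prod>l<n. x l ^ J l) = x i ^ J i * (\<Prod>l\<in>{..<n}-{i}. x l ^ J l)"
    using assms by (simp add: prod.remove)
  moreover have "(\<Prod>l<n. (x(i:=0)) l ^ (J(i:=0)) l) = (\<Prod>l\<in>{..<n}-{i}. x l ^ J l)"
    using assms by (simp add: prod.remove)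
  ultimately show ?thesis by simp
qed

lemma hcomplete_zero_i:
  assumes "i < n"
  shows "hcomplete n m (x(i:=0)) = (\<Sum>J\<in>{J\<in>multi_indices n m. J i = 0}. \<Prod>l<n. x l ^ J l)"
proof -
  have "hcomplete n m (x(i:=0)) = (\<Sum>J\<in>multi_indices n m. if J i = 0 then \<Prod>l<n. x l ^ J l else 0)"
    unfolding hcomplete_def
  proof (rule sum.cong[OF refl])
    fix J assume "J \<in> multi_indices n m"
    show "(\<Prod>l<n. (x(i := 0)) l ^ J l) = (if J i = 0 then \<Prod>l<n. x l ^ J l else 0)"
      using prod_split_i[OF assms, of "x(i:=0)" J] prod_split_i[OF assms, of x J] by auto
  qed
  also have "\<dots> = (\<Sum>J\<in>{J\<in>multi_indices n m. J i = 0}. \<Prod>l<n. x l ^ J l)"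
    by (simp add: sum.inter_filter[OF finite_MI])
  finally show ?thesis .
qed

lemma hcomplete_split:
  assumes "i < n"
  shows "hcomplete n k x = (\<Sum>j\<le>k. x i ^ j * hcomplete n (k-j) (x(i:=0)))"
proof -
  have im: "(\<lambda>J. J i) ` multi_indices n k \<subseteq> {..k}"
  proof (clarsimp simp: multi_indices_def)
    fix J :: "nat \<Rightarrow> nat" assume "k = (\<Sum>i<n. J i)"
    thus "J i \<le> (\<Sum>i<n. J i)" using member_le_sum[of i "{..<n}" J] assms by auto
  qed
  have "hcomplete n k x = (\<Sum>j\<le>k. \<Sum>J\<in>{J\<in>multi_indices n k. J i = j}. \<Prod>l<n. x l ^ J l)"
    unfolding hcomplete_def by (rule sum.group[OF finite_MI _ im, symmetric]) simp
  also have "\<dots> = (\<Sum>j\<le>k. x i ^ j * hcomplete n (k-j) (x(i:=0)))"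
  proof (rule sum.cong[OF refl])
    fix j assume j: "j \<in> {..k}"
    have "(\<Sum>J\<in>{J\<in>multi_indices n k. J i = j}. \<Prod>l<n. x l ^ J l)
        = (\<Sum>J\<in>{J\<in>multi_indices n k. J i = j}. x i ^ j * (\<Prod>l<n. x l ^ (J(i:=0)) l))"
      by (rule sum.cong[OF refl]) (use prod_split_i[OF assms, of x] prod_split_i[OF assms, of x "_(i:=0)"] in auto)
    also have "\<dots> = x i ^ j * (\<Sum>J\<in>{J\<in>multi_indices n k. J i = j}. (\<Prod>l<n. x l ^ (J(i:=0)) l))"
      by (simp add: sum_distrib_left)
    also have "(\<Sum>J\<in>{J\<in>multi_indices n k. J i = j}. (\<Prod>l<n. x l ^ (J(i:=0)) l))
       = (\<Sum>J\<in>{J\<in>multi_indices n (k-j). J i = 0}. \<Prod>l<n. x l ^ J l)"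
    proof (rule sum.reindex_bij_witness[of _ "\<lambda>J. J(i:=j)" "\<lambda>J. J(i:=0)"])
      fix J assume J: "J \<in> {J\<in>multi_indices n k. J i = j}"
      hence s: "(\<Sum>l<n. J l) = J i + (\<Sum>l\<in>{..<n}-{i}. J l)" using assms by (simp add: sum.remove)
      have s2: "(\<Sum>l<n. (J(i:=0)) l) = (\<Sum>l\<in>{..<n}-{i}. J l)" using assms by (simp add: sum.remove)
      show "J(i:=0) \<in> {J\<in>multi_indices n (k-j). J i = 0}"
        using J s s2 assms by (auto simp: multi_indices_def)
      show "(J(i:=0))(i:=j) = J" using J by auto
      show "(\<Prod>l<n. x l ^ (J(i:=0)) l) = (\<Prod>l<n. x l ^ (J(i:=0)) l)" by simp
    next
      fix J assume J: "J \<in> {J\<in>multi_indices n (k-j). J i = 0}"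
      hence s: "(\<Sum>l<n. J l) = (\<Sum>l\<in>{..<n}-{i}. J l)" using assms by (simp add: sum.remove)
      have s2: "(\<Sum>l<n. (J(i:=j)) l) = j + (\<Sum>l\<in>{..<n}-{i}. J l)" using assms by (simp add: sum.remove)
      show "J(i:=j) \<in> {J\<in>multi_indices n k. J i = j}"
        using J s s2 assms j by (auto simp: multi_indices_def)
      show "(J(i:=j))(i:=0) = J" using J by auto
    qed
    finally show "(\<Sum>J\<in>{J\<in>multi_indices n k. J i = j}. \<Prod>l<n. x l ^ J l) = x i ^ j * hcomplete n (k-j) (x(i:=0))"
      using hcomplete_zero_i[OF assms] by simp
  qed
  finally show ?thesis .
qed

lemma hcomplete_drop:
  "hcomplete (Suc m) l (z(m:=0)) = hcomplete m l z"
proof -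
  have sub: "multi_indices m l \<subseteq> multi_indices (Suc m) l"
    by (auto simp: multi_indices_def)
  have "hcomplete (Suc m) l (z(m:=0)) = (\<Sum>J\<in>multi_indices m l. \<Prod>i<Suc m. (z(m:=0)) i ^ J i)"
    unfolding hcomplete_def
  proof (rule sum.mono_neutral_right[OF finite_MI sub], rule ballI)
    fix J assume J: "J \<in> multi_indices (Suc m) l - multi_indices m l"
    have "J m \<noteq> 0"
    proof
      assume "J m = 0"
      with J show False by (auto simp: multi_indices_def) (metis le_neq_implies_less less_eq_Suc_le neq0_conv)
    qed
    thus "(\<Prod>i<Suc m. (z(m := 0)) i ^ J i) = 0" by simp
  qed
  also have "\<dots> = hcomplete m l z"
    unfolding hcomplete_def
    by (rule sum.cong[OF refl]) (auto simp: multi_indices_def intro!: prod.cong)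
  finally show ?thesis .
qed

lemma hcomplete_Suc:
  "hcomplete (Suc m) l z = (\<Sum>j\<le>l. z m ^ j * hcomplete m (l-j) z)"
  using hcomplete_split[of m "Suc m" l z] hcomplete_drop by simp

lemma hcomplete_0: "hcomplete 0 l z = (if l = 0 then 1 else 0)"
proof -
  have "multi_indices 0 l = (if l = 0 then {\<lambda>_. 0} else {})"
    by (auto simp: multi_indices_def)
  thus ?thesis by (simp add: hcomplete_def)
qed


definition Qp :: "(nat \<Rightarrow> complex) \<Rightarrow> nat \<Rightarrow> nat \<Rightarrow> complex poly" where
  "Qp z m k = (\<Sum>j\<le>k. monom (hcomplete m (k-j) z) j)"

definition Pp :: "(nat \<Rightarrow> complex) \<Rightarrow> nat \<Rightarrow> complex poly" where
  "Pp z m = (\<Prod>i<m. [:-z i, 1:])"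

lemma coeff_Qp: "coeff (Qp z m k) j = (if j \<le> k then hcomplete m (k-j) z else 0)"
  by (simp add: Qp_def coeff_sum coeff_monom)

lemma poly_Qp: "poly (Qp z m k) a = (\<Sum>j\<le>k. a ^ j * hcomplete m (k-j) z)"
  by (simp add: Qp_def poly_sum poly_monom mult.commute)

lemma hcomplete_m0: "hcomplete m 0 z = 1"
  by (induction m) (simp_all add: hcomplete_0 hcomplete_Suc)

lemma hcomplete_rec:
  "hcomplete (Suc m) (Suc l) z = hcomplete m (Suc l) z + z m * hcomplete (Suc m) l z"
proof -
  have "hcomplete (Suc m) (Suc l) z = hcomplete m (Suc l) z + (\<Sum>j\<le>l. z m ^ Suc j * hcomplete m (Suc l - Suc j) z)"
    unfolding hcomplete_Suc[of m "Suc l"] sum.atMost_Suc_shift by simp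
  also have "(\<Sum>j\<le>l. z m ^ Suc j * hcomplete m (Suc l - Suc j) z) = z m * hcomplete (Suc m) l z"
    unfolding hcomplete_Suc[of m l] sum_distrib_left by (simp add: mult.assoc)
  finally show ?thesis .
qed

lemma Qp_step:
  "Qp z (Suc m) k * [:-z m, 1:] = Qp z m (Suc k) - [:hcomplete (Suc m) (Suc k) z:]"
proof (rule poly_eqI)
  fix j
  show "coeff (Qp z (Suc m) k * [:-z m, 1:]) j = coeff (Qp z m (Suc k) - [:hcomplete (Suc m) (Suc k) z:]) j"
  proof (cases j)
    case 0
    then show ?thesis by (simp add: coeff_Qp hcomplete_rec)
  next
    case (Suc j')
    show ?thesis
    proof (cases "j' < k")
      case True
      then obtain d where d: "k - j' = Suc d" by (metis Suc_diff_Suc zero_less_diff)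
      have "k - Suc j' = d" using d by simp
      then show ?thesis using Suc True d
        by (simp add: coeff_Qp coeff_pCons hcomplete_rec Suc_diff_le)
    next
      case False
      then show ?thesis using Suc by (auto simp: coeff_Qp coeff_pCons hcomplete_m0)
    qed
  qed
qed

lemma degree_Pp: "degree (Pp z m) = m"
proof -
  have "degree (Pp z m) = (\<Sum>i<m. degree [:-z i, 1:])"
    unfolding Pp_def by (rule degree_prod_eq_sum_degree) auto
  thus ?thesis by simp
qed

lemma I1: "\<forall>k j. m \<le> j \<longrightarrow> coeff (Qp z m k * Pp z m) j = (if j = m + k then 1 else 0)"
proof (induction m)
  case 0
  show ?case by (auto simp: Pp_def coeff_Qp hcomplete_0)
next
  case (Suc m)
  show ?case
  proof (intro allI impI)
    fix k j assume j: "Suc m \<le> j"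
    have "Qp z (Suc m) k * Pp z (Suc m) = (Qp z (Suc m) k * [:-z m, 1:]) * Pp z m"
      by (simp only: Pp_def prod.lessThan_Suc mult_ac)
    also have "\<dots> = Qp z m (Suc k) * Pp z m - smult (hcomplete (Suc m) (Suc k) z) (Pp z m)"
      by (simp only: Qp_step left_diff_distrib) (simp del: mult_pCons_right)
    finally have e: "Qp z (Suc m) k * Pp z (Suc m) = \<dots>" .
    have "coeff (Pp z m) j = 0" using j degree_Pp[of z m] by (intro coeff_eq_0) auto
    thus "coeff (Qp z (Suc m) k * Pp z (Suc m)) j = (if j = Suc m + k then 1 else 0)"
      using Suc.IH j unfolding e by simp
  qed
qed


lemma F_deriv:
  fixes c :: "nat \<Rightarrow> complex"
  shows "((\<lambda>t. \<Sum>j\<le>Suc K. t ^ j * c (Suc K - j)) has_field_derivative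
          (\<Sum>j\<le>K. t ^ j * (\<Sum>l\<le>K-j. t ^ l * c (K - j - l)))) (at t)"
proof (induction K arbitrary: t)
  case 0
  have e: "(\<lambda>t. \<Sum>j\<le>Suc 0. t ^ j * c (Suc 0 - j)) = (\<lambda>t. c 1 + t * c 0)" by simp
  show ?case unfolding e by (auto intro!: derivative_eq_intros)
next
  case (Suc K)
  have e: "(\<lambda>t. \<Sum>j\<le>Suc (Suc K). t ^ j * c (Suc (Suc K) - j)) = (\<lambda>t. c (Suc (Suc K)) + t * (\<Sum>j\<le>Suc K. t ^ j * c (Suc K - j)))"
    by (rule ext) (simp add: sum.atMost_Suc_shift[of _ "Suc K"] sum_distrib_left mult.assoc del: sum.atMost_Suc)
  have d: "((\<lambda>t. c (Suc (Suc K)) + t * (\<Sum>j\<le>Suc K. t ^ j * c (Suc K - j))) has_field_derivative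
     (0 + (t * (\<Sum>j\<le>K. t ^ j * (\<Sum>l\<le>K-j. t ^ l * c (K - j - l))) + 1 * (\<Sum>j\<le>Suc K. t ^ j * c (Suc K - j))))) (at t)"
    by (rule DERIV_add[OF DERIV_const DERIV_mult'[OF DERIV_ident Suc.IH]])
  have eq: "0 + (t * (\<Sum>j\<le>K. t ^ j * (\<Sum>l\<le>K-j. t ^ l * c (K - j - l))) + 1 * (\<Sum>j\<le>Suc K. t ^ j * c (Suc K - j)))
     = (\<Sum>j\<le>Suc K. t ^ j * (\<Sum>l\<le>Suc K-j. t ^ l * c (Suc K - j - l)))"
    by (simp add: sum.atMost_Suc_shift[of _ K] sum_distrib_left mult.assoc del: sum.atMost_Suc)
  show ?case unfolding e using d unfolding eq .
qed

lemma partial_deriv_eq: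
  assumes "i < n" "k \<ge> 1"
  shows "partial_deriv i (hcomplete n k) z = poly (Qp z n (k-1)) (z i)"
proof -
  define c where "c l = hcomplete n l (z(i:=0))" for l
  obtain K where K: "k = Suc K" using assms by (cases k) auto
  have f: "(\<lambda>t. hcomplete n k (z(i:=t))) = (\<lambda>t. \<Sum>j\<le>Suc K. t ^ j * c (Suc K - j))"
  proof (rule ext)
    fix t
    have "hcomplete n k (z(i:=t)) = (\<Sum>j\<le>k. (z(i:=t)) i ^ j * hcomplete n (k-j) ((z(i:=t))(i:=0)))"
      by (rule hcomplete_split[OF assms(1)])
    thus "hcomplete n k (z(i:=t)) = (\<Sum>j\<le>Suc K. t ^ j * c (Suc K - j))"
      by (simp add: c_def K del: sum.atMost_Suc)
  qed
  have h: "hcomplete n l z = (\<Sum>j\<le>l. z i ^ j * c (l - j))" for l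
    using hcomplete_split[OF assms(1), of l z] by (simp add: c_def)
  have "partial_deriv i (hcomplete n k) z = (\<Sum>j\<le>K. z i ^ j * (\<Sum>l\<le>K-j. z i ^ l * c (K - j - l)))"
    unfolding partial_deriv_def f by (rule DERIV_imp_deriv[OF F_deriv])
  also have "\<dots> = poly (Qp z n (k-1)) (z i)"
    by (simp add: poly_Qp K h del: sum.atMost_Suc)
  finally show ?thesis .
qed


theorem lemma15:
  fixes n k :: nat and z :: "nat \<Rightarrow> complex"
  assumes "k \<ge> 2" and "n \<ge> 1" and "\<exists>i<n. z i \<noteq> 0"
  shows "\<exists>i<n. partial_deriv i (hcomplete n k) z \<noteq> 0"
proof (rule ccontr)
  assume "\<not> ?thesis"
  hence D0: "poly (Qp z n (k-1)) (z i) = 0" if "i < n" for i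
    using partial_deriv_eq[of i n k z] assms(1) that by auto
  define Q where "Q = Qp z n (k-1)"
  define P where "P = Pp z n"
  define N where "N = n + (k-1)"
  define f where "f = Q * P"
  have cf: "coeff f j = (if j = N then 1 else 0)" if "n \<le> j" for j
    using I1[of n z] that unfolding f_def Q_def P_def N_def by blast
  define g where "g = pCons 0 (pderiv f) - smult (of_nat N) f"
  have cg: "coeff g j = (of_nat j - of_nat N) * coeff f j" for j
    by (cases j) (simp_all add: g_def coeff_pderiv algebra_simps)
  have dvdQ: "[:-z i, 1:] dvd Q" if "i < n" for i
    using D0[OF that] unfolding Q_def by (simp add: poly_eq_0_iff_dvd)
  have dP: "P dvd Q * pderiv P"
  proof -
    have "Q * pderiv P = (\<Sum>i<n. Q * (\<Prod>l\<in>{..<n}-{i}. [:-z l, 1:]))"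
      unfolding P_def Pp_def pderiv_prod by (simp add: sum_distrib_left pderiv_pCons)
    also have "P dvd \<dots>"
    proof (rule dvd_sum)
      fix i assume "i \<in> {..<n}"
      hence i: "i < n" by simp
      obtain R where R: "Q = [:-z i, 1:] * R" using dvdQ[OF i] by (auto elim: dvdE)
      have "Q * (\<Prod>l\<in>{..<n}-{i}. [:-z l, 1:]) = R * ([:-z i, 1:] * (\<Prod>l\<in>{..<n}-{i}. [:-z l, 1:]))"
        unfolding R by (simp only: mult_ac)
      also have "[:-z i, 1:] * (\<Prod>l\<in>{..<n}-{i}. [:-z l, 1:]) = P"
        unfolding P_def Pp_def using i by (simp add: prod.remove del: mult_pCons_left)
      finally show "P dvd Q * (\<Prod>l\<in>{..<n}-{i}. [:-z l, 1:])" by simp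
    qed
    finally show ?thesis .
  qed
  have gP: "P dvd g"
  proof -
    have "g = P * (pCons 0 (pderiv Q) - smult (of_nat N) Q) + pCons 0 (Q * pderiv P)"
      unfolding g_def f_def pderiv_mult
      by (simp add: algebra_simps)
    moreover obtain W where "Q * pderiv P = P * W" using dP by (auto elim: dvdE)
    ultimately have "g = P * (pCons 0 (pderiv Q) - smult (of_nat N) Q) + P * pCons 0 W"
      by simp
    thus ?thesis by (metis dvd_add dvd_triv_left)
  qed
  have degP: "degree P = n" unfolding P_def by (rule degree_Pp)
  have g0: "g = 0"
  proof (rule ccontr)
    assume gn: "g \<noteq> 0"
    have "coeff g j = 0" if "j > n - 1" for j
      using cf[of j] that assms(2) by (auto simp: cg)
    hence "degree g \<le> n - 1" by (intro degree_le) auto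
    moreover have "degree P \<le> degree g" by (rule dvd_imp_degree_le[OF gP gn])
    ultimately show False using degP assms(2) by simp
  qed
  have fm: "f = monom 1 N"
  proof (rule poly_eqI)
    fix j
    show "coeff f j = coeff (monom 1 N) j"
    proof (cases "j = N")
      case True
      thus ?thesis using cf[of j] by (simp add: N_def)
    next
      case False
      have "(of_nat j - of_nat N :: complex) * coeff f j = 0" using g0 cg[of j] by simp
      moreover have "(of_nat j - of_nat N :: complex) \<noteq> 0" using False by simp
      ultimately show ?thesis using False by simp
    qed
  qed
  obtain i where i: "i < n" "z i \<noteq> 0" using assms(3) by blast
  have "poly P (z i) = 0"
    unfolding P_def Pp_def poly_prod using i(1) by (auto intro: prod_zero)
  hence "poly f (z i) = 0" by (simp add: f_def)
  moreover have "poly f (z i) = z i ^ N" by (simp add: fm poly_monom)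
  ultimately show False using i(2) by simp
qed

end
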